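(* Let $f\colon[n]\to\mathbb{R}$ and let $x<y<z$ be elements of $[n]$ such that $f$ is not convex on $\{x,y,z\}$, i.e. $\frac{f(y)-f(x)}{y-x}>\frac{f(z)-f(y)}{z-y}$. Then at least one of $x$, $y$, $z$ fails some triple test rooted at it whose height is at most $2\max\{y-x,\,z-y\}$.
   Context: $[n]=\{0,\dots,n-1\}$. For $a\in[n]$, a triple test rooted at $a$ is a (not necessarily sorted) triple $(a,b,c)$ such that $b\in\{2^k\lfloor\frac{a-1}{2^k}\rfloor,\ 2^k\lceil\frac{a+1}{2^k}\rceil\}$ for some integer $k$ with $1\le2^k<n$, and $c\in\{a+1,b+1\}$; the number $2^k$ is the height of the triple test, and $b$ is called a hub of $a$. The point $a$ fails the triple test if $f$ is not convex on $\{a,b,c\}$, where $f$ is convex on a set of three reals $u<v<w$ iff $\frac{f(v)-f(u)}{v-u}\le\frac{f(w)-f(v)}{w-v}$ (a set with fewer than three points is trivially convex). *)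

theory Defs
  imports Complex_Main
begin

text \<open>Points of [n] = {0,...,n-1} are represented as integers; f :: int => real
  is only ever evaluated at points of [n].\<close>

definition conv_on :: "(int \<Rightarrow> real) \<Rightarrow> int set \<Rightarrow> bool" where
  "conv_on f S \<longleftrightarrow> (\<forall>u\<in>S. \<forall>v\<in>S. \<forall>w\<in>S. u < v \<and> v < w \<longrightarrow>
      (f v - f u) / real_of_int (v - u) \<le> (f w - f v) / real_of_int (w - v))"

text \<open>(a,b,c) is a triple test rooted at a of height 2^k (all points in [n]).\<close>
definition triple_test :: "nat \<Rightarrow> int \<Rightarrow> nat \<Rightarrow> int \<Rightarrow> int \<Rightarrow> bool" where
  "triple_test n a k b c \<longleftrightarrow>
     a \<in> {0..<int n} \<and> b \<in> {0..<int n} \<and> c \<in> {0..<int n} \<and>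
     1 \<le> (2::nat)^k \<and> (2::nat)^k < n \<and>
     (b = 2^k * \<lfloor>real_of_int (a - 1) / 2^k\<rfloor> \<or> b = 2^k * \<lceil>real_of_int (a + 1) / 2^k\<rceil>) \<and>
     (c = a + 1 \<or> c = b + 1)"

definition fails_test :: "(int \<Rightarrow> real) \<Rightarrow> nat \<Rightarrow> int \<Rightarrow> nat \<Rightarrow> int \<Rightarrow> int \<Rightarrow> bool" where
  "fails_test f n a k b c \<longleftrightarrow> triple_test n a k b c \<and> \<not> conv_on f {a, b, c}"

end

theory Submission imports Defs begin

lemma pack: fixes u v d j :: int
  shows "u < d*j \<Longrightarrow> d*j < v \<Longrightarrow> d*(j-1) \<le> u \<Longrightarrow> v \<le> d*(j+1) \<Longrightarrow> d \<le> 2*(v-u-1) \<Longrightarrow> d = 2^k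
  \<Longrightarrow> \<exists>k j. u < 2^k*j \<and> 2^k*j < v \<and> 2^k*(j-1) \<le> u \<and> v \<le> 2^k*(j+1) \<and> (2::int)^k \<le> 2*(v-u-1)"
  by blast

lemma hub_exists:
  fixes u v :: int assumes "0 \<le> u" "u + 2 \<le> v"
  shows "\<exists>k j. u < 2^k*j \<and> 2^k*j < v \<and> 2^k*(j-1) \<le> u \<and> v \<le> 2^k*(j+1) \<and> (2::int)^k \<le> 2*(v-u-1)"
proof -
  define L where "L = nat (v-u-1)"
  have "L \<ge> 1" using assms unfolding L_def by simp
  then obtain k where k: "2^k \<le> L" "L < 2^(k+1)" using ex_power_ivl1[of 2 L] by auto
  define d where "d = (2::int)^k"
  have dpos: "d > 0" unfolding d_def by simp
  have iL: "int L = v-u-1" using assms unfolding L_def by simp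
  have k2: "int (2^k) \<le> int L" "int L < int (2^(k+1))" using k by linarith+
  have kk: "d \<le> v-u-1" "v-u-1 < 2*d" using k2 unfolding iL d_def by simp_all
  define j0 where "j0 = u div d + 1"
  have dm: "d*(u div d) + u mod d = u" by simp
  have md: "0 \<le> u mod d" "u mod d < d" using dpos by simp_all
  have "d*(j0-1) = d*(u div d)" "d*j0 = d*(u div d) + d" unfolding j0_def by (simp_all add: algebra_simps)
  then have j0: "d*(j0-1) \<le> u" "u < d*j0" using dm md by (smt (verit))+
  have dk1: "(2::int)^(k+1) = 2*d" unfolding d_def by simp
  show ?thesis
  proof (cases "v \<le> d*(j0+1)")
    case le: True
    have ee: "d*(j0+1) = d*j0 + d" "d*(j0-1) = d*j0 - d" by (simp_all add: algebra_simps)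
    show ?thesis apply (rule pack[of u d j0 v k]) using ee j0 kk le d_def by (smt (verit))+
  next
    case gt: False
    have e1: "d*(j0+1) = d*j0 + d" by (simp add: algebra_simps)
    show ?thesis
    proof (cases "even j0")
      case True
      then obtain m where m: "j0 = 2*m" by auto
      have "2*d*m = d*j0" "2*d*(m-1) = d*j0 - 2*d" "2*d*(m+1) = d*j0+2*d" unfolding m by (simp_all add: algebra_simps)
      then show ?thesis apply - apply (rule pack[of u "2*d" m v "k+1"]) using j0 kk gt e1 dk1 by (smt (verit))+
    next
      case odd: False
      have "j0 + 1 = 2*(j0 div 2 + 1)" using odd by presburger
      then obtain m where m: "j0 + 1 = 2*m" by blast
      have "2*d*m = d*j0+d" "2*d*(m-1) = d*j0 - d" "2*d*(m+1) = d*j0+3*d" 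
        using arg_cong[OF m, of "\<lambda>t. d*t"] by (simp_all add: algebra_simps)
      then show ?thesis apply - apply (rule pack[of u "2*d" m v "k+1"]) using j0 kk gt e1 dk1 by (smt (verit))+
    qed
  qed
qed

lemma hub_right:
  fixes a j :: int assumes "(2::int)^k*(j-1) \<le> a" "a < 2^k*j"
  shows "2^k*j = (2::int)^k * \<lceil>real_of_int (a+1) / 2^k\<rceil>"
proof -
  have "\<lceil>real_of_int (a+1) / 2^k\<rceil> = j"
    unfolding ceiling_eq_iff
  proof
    have "real_of_int (2^k*(j-1)) < real_of_int (a+1)" using assms by linarith
    then show "real_of_int j - 1 < real_of_int (a+1) / 2^k" by (simp add: field_simps)
    have "real_of_int (a+1) \<le> real_of_int (2^k*j)" using assms by linarith
    then show "real_of_int (a+1) / 2^k \<le> real_of_int j" by (simp add: field_simps)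
  qed
  then show ?thesis by simp
qed

lemma hub_left:
  fixes a j :: int assumes "(2::int)^k*j < a" "a \<le> 2^k*(j+1)"
  shows "2^k*j = (2::int)^k * \<lfloor>real_of_int (a-1) / 2^k\<rfloor>"
proof -
  have "\<lfloor>real_of_int (a-1) / 2^k\<rfloor> = j"
    unfolding floor_eq_iff
  proof
    have "real_of_int (2^k*j) \<le> real_of_int (a-1)" using assms by linarith
    then show "real_of_int j \<le> real_of_int (a-1) / 2^k" by (simp add: field_simps)
    have "real_of_int (a-1) < real_of_int (2^k*(j+1))" using assms by linarith
    then show "real_of_int (a-1) / 2^k < real_of_int j + 1" by (simp add: field_simps)
  qed
  then show ?thesis by simp
qed

definition sl :: "(int \<Rightarrow> real) \<Rightarrow> int \<Rightarrow> int \<Rightarrow> real" where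
  "sl f a b = (f b - f a) / real_of_int (b - a)"

lemma conv3: "conv_on f S \<Longrightarrow> a \<in> S \<Longrightarrow> b \<in> S \<Longrightarrow> c \<in> S \<Longrightarrow> a < b \<Longrightarrow> b < c \<Longrightarrow> sl f a b \<le> sl f b c"
  unfolding conv_on_def sl_def by blast

lemma avg:
  assumes "a < b" "b < c"
  shows "(sl f a b \<le> sl f b c) = (sl f a b \<le> sl f a c)"
        "(sl f a b \<le> sl f b c) = (sl f a c \<le> sl f b c)"
proof -
  have p1: "real_of_int (b-a) > 0" "real_of_int (c-b) > 0" "real_of_int (c-a) > 0" using assms by auto
  have e: "real_of_int (c-a) = real_of_int (b-a) + real_of_int (c-b)" by simp
  define p q where "p = real_of_int (b-a)" and "q = real_of_int (c-b)"
  have pq: "p > 0" "q > 0" using p1 p_def q_def by auto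
  show "(sl f a b \<le> sl f b c) = (sl f a b \<le> sl f a c)"
    unfolding sl_def e p_def[symmetric] q_def[symmetric] using pq
    by (simp add: field_simps)
  show "(sl f a b \<le> sl f b c) = (sl f a c \<le> sl f b c)"
    unfolding sl_def e p_def[symmetric] q_def[symmetric] using pq
    by (simp add: field_simps) 
qed


lemma mk_test:
  assumes "0 \<le> a" "a < int n" "0 \<le> b" "b < int n" "0 \<le> c" "c < int n" "(2::int)^k < int n"
    "b = 2^k * \<lfloor>real_of_int (a - 1) / 2^k\<rfloor> \<or> b = 2^k * \<lceil>real_of_int (a + 1) / 2^k\<rceil>"
    "c = a + 1 \<or> c = b + 1"
  shows "triple_test n a k b c"
proof -
  have "int ((2::nat)^k) < int n" using assms(7) by simp
  then have "(2::nat)^k < n" by linarith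
  then show ?thesis unfolding triple_test_def using assms by auto
qed

lemma sl_eq: "sl f a (a+1) = f (a+1) - f a" unfolding sl_def by simp

theorem lemma3p3:
  fixes f :: "int \<Rightarrow> real" and n :: nat and x y z :: int
  assumes "x \<in> {0..<int n}" "y \<in> {0..<int n}" "z \<in> {0..<int n}"
    and "x < y" "y < z"
    and "(f y - f x) / real_of_int (y - x) > (f z - f y) / real_of_int (z - y)"
  shows "\<exists>a\<in>{x, y, z}. \<exists>k b c. fails_test f n a k b c \<and>
           int (2 ^ k) \<le> 2 * max (y - x) (z - y)"
proof (rule ccontr)
  assume H: "\<not> ?thesis"
  have T: "\<And>a k b c. a \<in> {x,y,z} \<Longrightarrow> triple_test n a k b c \<Longrightarrow> (2::int)^k \<le> 2 * max (y - x) (z - y) \<Longrightarrow> conv_on f {a,b,c}"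
  proof (rule ccontr)
    fix a k b c assume a: "a \<in> {x,y,z}" "triple_test n a k b c" "(2::int)^k \<le> 2 * max (y - x) (z - y)"
      and nc: "\<not> conv_on f {a,b,c}"
    have "fails_test f n a k b c" using a(2) nc unfolding fails_test_def by simp
    moreover have "int (2^k) \<le> 2 * max (y - x) (z - y)" using a(3) by simp
    ultimately show False using H a(1) by blast
  qed
  have r: "0 \<le> x" "z < int n" "x < y" "y < z" using assms by auto
  have left: "sl f x y \<le> sl f y (y+1)"
  proof (cases "y - x = 1")
    case True
    have tt: "triple_test n y 0 x (y+1)" using r True by (intro mk_test) auto
    have h0: "(2::int)^0 \<le> 2*max (y-x) (z-y)" using r by (simp add: max_def)
    have "conv_on f {y,x,y+1}" using T[OF _ tt h0] by simp
    then show ?thesis using conv3[of f "{y,x,y+1}" x y "y+1"] r by auto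
  next
    case False
    then obtain k j where kj: "x < 2^k*j" "2^k*j < y" "2^k*(j-1) \<le> x" "y \<le> 2^k*(j+1)" "(2::int)^k \<le> 2*(y-x-1)"
      using hub_exists[of x y] r by auto
    define p where "p = (2::int)^k*j"
    have pr: "x < p" "p < y" using kj p_def by auto
    have "j > 0" using kj r by (smt (verit) mult_le_0_iff zero_less_power)
    then have kp: "(2::int)^k \<le> p" unfolding p_def by simp
    have kn: "(2::int)^k < int n" using kp pr r by linarith
    have h: "(2::int)^k \<le> 2 * max (y - x) (z - y)" using kj by (simp add: max_def)
    have hr: "p = 2^k * \<lceil>real_of_int (x + 1) / 2^k\<rceil>" unfolding p_def by (rule hub_right) (use kj in auto)
    have hl: "p = 2^k * \<lfloor>real_of_int (y - 1) / 2^k\<rfloor>" unfolding p_def by (rule hub_left) (use kj in auto)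
    
    have t1: "triple_test n x k p (p+1)" using r pr kp hr[symmetric] kn by (intro mk_test) auto
    have t2: "triple_test n y k p (p+1)" using r pr kp hl[symmetric] kn by (intro mk_test) auto
    have t3: "triple_test n y k p (y+1)" using r pr kp hl[symmetric] kn by (intro mk_test) auto
    have c1: "sl f x p \<le> sl f p (p+1)" using conv3[OF T[OF _ t1 h], of x p "p+1"] pr by auto
    have c2: "sl f p (p+1) \<le> sl f p y"
    proof (cases "p + 1 = y")
      case True then show ?thesis by simp
    next
      case False
      then have "sl f p (p+1) \<le> sl f (p+1) y" using conv3[OF T[OF _ t2 h], of p "p+1" y] pr by auto
      then show ?thesis using avg(1)[of p "p+1" y f] pr False by auto
    qed
    have c3: "sl f p y \<le> sl f y (y+1)" using conv3[OF T[OF _ t3 h], of p y "y+1"] pr by auto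
    have "sl f x p \<le> sl f p y" using c1 c2 by linarith
    then have "sl f x y \<le> sl f p y" using avg(2)[of x p y f] pr by auto
    then show ?thesis using c3 by linarith
  qed
  have right: "sl f y (y+1) \<le> sl f y z"
  proof (cases "z - y = 1")
    case True
    then show ?thesis by (smt (verit))
  next
    case False
    then obtain k j where kj: "y < 2^k*j" "2^k*j < z" "2^k*(j-1) \<le> y" "z \<le> 2^k*(j+1)" "(2::int)^k \<le> 2*(z-y-1)"
      using hub_exists[of y z] r by auto
    define q where "q = (2::int)^k*j"
    have qr: "y < q" "q < z" using kj q_def by auto
    have "j > 0" using kj r by (smt (verit) mult_le_0_iff zero_less_power)
    then have kq: "(2::int)^k \<le> q" unfolding q_def by simp
    have kn: "(2::int)^k < int n" using kq qr r by linarith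
    have h: "(2::int)^k \<le> 2 * max (y - x) (z - y)" using kj by (simp add: max_def)
    have hr: "q = 2^k * \<lceil>real_of_int (y + 1) / 2^k\<rceil>" unfolding q_def by (rule hub_right) (use kj in auto)
    have hl: "q = 2^k * \<lfloor>real_of_int (z - 1) / 2^k\<rfloor>" unfolding q_def by (rule hub_left) (use kj in auto)
    
    have u1: "triple_test n y k q (y+1)" using r qr kq hr[symmetric] kn by (intro mk_test) auto
    have u2: "triple_test n y k q (q+1)" using r qr kq hr[symmetric] kn by (intro mk_test) auto
    have u3: "triple_test n z k q (q+1)" using r qr kq hl[symmetric] kn by (intro mk_test) auto
    have c1: "sl f y (y+1) \<le> sl f y q"
    proof (cases "y + 1 = q")
      case True then show ?thesis by simp
    next
      case False
      then have "sl f y (y+1) \<le> sl f (y+1) q" using conv3[OF T[OF _ u1 h], of y "y+1" q] qr by auto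
      then show ?thesis using avg(1)[of y "y+1" q f] qr False by auto
    qed
    have c2: "sl f y q \<le> sl f q (q+1)" using conv3[OF T[OF _ u2 h], of y q "q+1"] qr by auto
    have c3: "sl f q (q+1) \<le> sl f q z"
    proof (cases "q + 1 = z")
      case True then show ?thesis by simp
    next
      case False
      then have "sl f q (q+1) \<le> sl f (q+1) z" using conv3[OF T[OF _ u3 h], of q "q+1" z] qr by auto
      then show ?thesis using avg(1)[of q "q+1" z f] qr False by auto
    qed
    have "sl f y q \<le> sl f q z" using c2 c3 by linarith
    then show ?thesis using avg(1)[of y q z f] qr c1 by auto
  qed
  have "sl f x y \<le> sl f y z" using left right by linarith
  then show False using assms(6) unfolding sl_def by linarith
qed

end
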